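(* Let $N\ge 3$ and let $M_N$ be $K_N$ with the edge $\{u,v\}$ removed. Consider the Moran process with mutants on $M_N$ and residents on $K_N$. For a configuration with $a$ mutants among the $N-2$ vertices other than $u,v$ and $b$ mutants among $\{u,v\}$ ($0\le a\le N-2$, $0\le b\le 2$), the probability of reaching the all-mutant state equals \[ \varphi(a,b)=\frac{(a+b)(N-2)+\tfrac12 b(b-1)}{(N-1)^2}. \] Conversely, with mutants on $K_N$ and residents on $M_N$, the probability of reaching the all-mutant state from such a configuration equals \[ \frac{(a+b)(N-2)+\tfrac12 b(3-b)}{(N-1)^2}. \]
   Context: Moran Birth-death process on two graphs (neutral case): $G^A$ (mutant graph) and $G^B$ (resident graph) are connected undirected simple graphs on the same vertex set $\{1,\dots,N\}$. Every vertex is occupied by one individual, of type $A$ (mutant) or type $B$ (resident). In each step, one individual is chosen uniformly at random to reproduce; its offspring (same type) replaces the individual at a uniformly random neighbor of the parent's vertex, neighbors taken in $G^A$ if the parent is type $A$ and in $G^B$ if type $B$. The all-$A$ and all-$B$ states are absorbing. $K_N$ denotes the complete graph. *)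

theory Defs
  imports Complex_Main
begin

text \<open>Vertex set {1..N}. A graph is a symmetric irreflexive adjacency predicate on it.
  A state of the Moran process is the set S of vertices occupied by mutants (type A).\<close>

definition vset :: "nat \<Rightarrow> nat set" where
  "vset N = {1..N}"

definition nbrs :: "(nat \<Rightarrow> nat \<Rightarrow> bool) \<Rightarrow> nat \<Rightarrow> nat \<Rightarrow> nat set" where
  "nbrs G N x = {y \<in> vset N. G x y}"

definition complete_graph :: "nat \<Rightarrow> nat \<Rightarrow> bool" where
  "complete_graph x y \<longleftrightarrow> x \<noteq> y"

definition complete_minus_edge :: "nat \<Rightarrow> nat \<Rightarrow> nat \<Rightarrow> nat \<Rightarrow> bool" where
  "complete_minus_edge u v x y \<longleftrightarrow> x \<noteq> y \<and> {x, y} \<noteq> {u, v}"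

text \<open>One-step transition probability from mutant set S to mutant set T of the
  Birth-death Moran process (neutral): the parent x is uniform on the N vertices,
  the offspring replaces a uniform neighbour y of x, in GA if x is a mutant, in GB otherwise.\<close>
definition moran_step :: "(nat \<Rightarrow> nat \<Rightarrow> bool) \<Rightarrow> (nat \<Rightarrow> nat \<Rightarrow> bool) \<Rightarrow> nat \<Rightarrow>
    nat set \<Rightarrow> nat set \<Rightarrow> real" where
  "moran_step GA GB N S T =
     (\<Sum>x\<in>vset N. let G = (if x \<in> S then GA else GB) in
        (\<Sum>y\<in>nbrs G N x.
           (1 / real N) * (1 / real (card (nbrs G N x))) *
           (if T = (if x \<in> S then insert y S else S - {y}) then 1 else 0)))"

fun moran_nstep :: "(nat \<Rightarrow> nat \<Rightarrow> bool) \<Rightarrow> (nat \<Rightarrow> nat \<Rightarrow> bool) \<Rightarrow> nat \<Rightarrow> nat \<Rightarrow>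
    nat set \<Rightarrow> nat set \<Rightarrow> real" where
  "moran_nstep GA GB N 0 S T = (if S = T then 1 else 0)"
| "moran_nstep GA GB N (Suc n) S T =
     (\<Sum>U\<in>Pow (vset N). moran_step GA GB N S U * moran_nstep GA GB N n U T)"

text \<open>Since the all-A state is absorbing, the probability of reaching it from S is the limit
  of the probability of being in it after n steps.\<close>
definition fixation_prob_is ::
  "(nat \<Rightarrow> nat \<Rightarrow> bool) \<Rightarrow> (nat \<Rightarrow> nat \<Rightarrow> bool) \<Rightarrow> nat \<Rightarrow> nat set \<Rightarrow> real \<Rightarrow> bool" where
  "fixation_prob_is GA GB N S p \<longleftrightarrow>
     (\<lambda>n. moran_nstep GA GB N n S (vset N)) \<longlonglongrightarrow> p"

end

theory Submission
  imports Defs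
begin


definition sexp :: "(nat \<Rightarrow> nat \<Rightarrow> bool) \<Rightarrow> (nat \<Rightarrow> nat \<Rightarrow> bool) \<Rightarrow> nat \<Rightarrow>
    (nat set \<Rightarrow> real) \<Rightarrow> nat set \<Rightarrow> real" where
  "sexp GA GB N f S =
     (\<Sum>x\<in>vset N. (\<Sum>y\<in>nbrs (if x \<in> S then GA else GB) N x.
           (1 / real N) * (1 / real (card (nbrs (if x \<in> S then GA else GB) N x))) *
           f (if x \<in> S then insert y S else S - {y})))"

lemma finite_vset[simp]: "finite (vset N)" by (simp add: vset_def)
lemma card_vset[simp]: "card (vset N) = N" by (simp add: vset_def)
lemma nbrs_sub: "nbrs G N x \<subseteq> vset N" by (auto simp: nbrs_def)
lemma finite_nbrs[simp]: "finite (nbrs G N x)" by (meson finite_subset finite_vset nbrs_sub)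

lemma delta_aux: "n \<in> A \<Longrightarrow> finite A \<Longrightarrow> (\<Sum>T\<in>A. if T = n then (c::real) else 0) = c"
  by (simp add: sum.delta')

lemma delta_aux': "n \<in> Pow V \<Longrightarrow> finite V \<Longrightarrow> (\<Sum>T\<in>Pow V. if T = n then (c::real) else 0) = c"
  by (rule delta_aux) auto

lemma step_sum:
  assumes "S \<subseteq> vset N"
  shows "(\<Sum>T\<in>Pow (vset N). moran_step GA GB N S T * f T) = sexp GA GB N f S"
proof -
  have "(\<Sum>T\<in>Pow (vset N). moran_step GA GB N S T * f T)
     = (\<Sum>T\<in>Pow (vset N). \<Sum>x\<in>vset N. \<Sum>y\<in>nbrs (if x \<in> S then GA else GB) N x.
           (1 / real N) * (1 / real (card (nbrs (if x \<in> S then GA else GB) N x))) *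
           (if T = (if x \<in> S then insert y S else S - {y}) then 1 else 0) * f T)"
    unfolding moran_step_def Let_def by (simp add: sum_distrib_right)
  also have "\<dots> = (\<Sum>x\<in>vset N. \<Sum>T\<in>Pow (vset N). \<Sum>y\<in>nbrs (if x \<in> S then GA else GB) N x.
           (1 / real N) * (1 / real (card (nbrs (if x \<in> S then GA else GB) N x))) *
           (if T = (if x \<in> S then insert y S else S - {y}) then 1 else 0) * f T)"
    by (rule sum.swap)
  also have "\<dots> = (\<Sum>x\<in>vset N. \<Sum>y\<in>nbrs (if x \<in> S then GA else GB) N x. \<Sum>T\<in>Pow (vset N).
           (1 / real N) * (1 / real (card (nbrs (if x \<in> S then GA else GB) N x))) *
           (if T = (if x \<in> S then insert y S else S - {y}) then 1 else 0) * f T)"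
    by (rule sum.cong[OF refl], rule sum.swap)
  also have "\<dots> = sexp GA GB N f S"
    unfolding sexp_def
  proof (rule sum.cong[OF refl], rule sum.cong[OF refl])
    fix x y assume x: "x \<in> vset N" and y: "y \<in> nbrs (if x \<in> S then GA else GB) N x"
    have yv: "y \<in> vset N" using y nbrs_sub by blast
    let ?n = "if x \<in> S then insert y S else S - {y}"
    have mem: "?n \<in> Pow (vset N)" using yv assms by auto
    show "(\<Sum>T\<in>Pow (vset N).
           (1 / real N) * (1 / real (card (nbrs (if x \<in> S then GA else GB) N x))) *
           (if T = ?n then 1 else 0) * f T) =
         (1 / real N) * (1 / real (card (nbrs (if x \<in> S then GA else GB) N x))) * f ?n"
    proof -
      have "(\<Sum>T\<in>Pow (vset N).
           (1 / real N) * (1 / real (card (nbrs (if x \<in> S then GA else GB) N x))) *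
           (if T = ?n then 1 else 0) * f T) = (\<Sum>T\<in>Pow (vset N). if T = ?n then
           (1 / real N) * (1 / real (card (nbrs (if x \<in> S then GA else GB) N x))) * f ?n else 0)"
        by (rule sum.cong) auto
      also have "\<dots> = (1 / real N) * (1 / real (card (nbrs (if x \<in> S then GA else GB) N x))) * f ?n"
        using mem by (intro delta_aux') auto
      finally show ?thesis .
    qed
  qed
  finally show ?thesis .
qed

definition Ex :: "(nat \<Rightarrow> nat \<Rightarrow> bool) \<Rightarrow> (nat \<Rightarrow> nat \<Rightarrow> bool) \<Rightarrow> nat \<Rightarrow> nat \<Rightarrow>
    (nat set \<Rightarrow> real) \<Rightarrow> nat set \<Rightarrow> real" where
  "Ex GA GB N n f S = (\<Sum>T\<in>Pow (vset N). moran_nstep GA GB N n S T * f T)"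

lemma step_nonneg: "moran_step GA GB N S T \<ge> 0"
  unfolding moran_step_def Let_def by (intro sum_nonneg) auto

lemma nstep_nonneg: "moran_nstep GA GB N n S T \<ge> 0"
  by (induction n arbitrary: S) (auto intro!: sum_nonneg mult_nonneg_nonneg step_nonneg)

lemma Ex_0: "S \<subseteq> vset N \<Longrightarrow> Ex GA GB N 0 f S = f S"
proof -
  assume S: "S \<subseteq> vset N"
  have "Ex GA GB N 0 f S = (\<Sum>T\<in>Pow (vset N). if T = S then f S else 0)"
    unfolding Ex_def by (rule sum.cong) auto
  also have "\<dots> = f S" using S by (intro delta_aux') auto
  finally show ?thesis .
qed

lemma Ex_Suc: "Ex GA GB N (Suc n) f S = (\<Sum>U\<in>Pow (vset N). moran_step GA GB N S U * Ex GA GB N n f U)"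
proof -
  have "Ex GA GB N (Suc n) f S = (\<Sum>T\<in>Pow (vset N). \<Sum>U\<in>Pow (vset N).
          moran_step GA GB N S U * moran_nstep GA GB N n U T * f T)"
    unfolding Ex_def by (simp add: sum_distrib_right)
  also have "\<dots> = (\<Sum>U\<in>Pow (vset N). \<Sum>T\<in>Pow (vset N).
          moran_step GA GB N S U * (moran_nstep GA GB N n U T * f T))"
    by (subst sum.swap) (simp add: mult.assoc)
  also have "\<dots> = (\<Sum>U\<in>Pow (vset N). moran_step GA GB N S U * Ex GA GB N n f U)"
    unfolding Ex_def by (simp add: sum_distrib_left)
  finally show ?thesis .
qed

lemma Ex_Suc': "S \<subseteq> vset N \<Longrightarrow> Ex GA GB N (Suc n) f S = sexp GA GB N (Ex GA GB N n f) S"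
  by (simp add: Ex_Suc step_sum)

lemma sexp_lin: "sexp GA GB N (\<lambda>T. a * f T + b) S = a * sexp GA GB N f S + b * sexp GA GB N (\<lambda>_. 1) S"
  unfolding sexp_def by (simp add: sum.distrib sum_distrib_left algebra_simps del: sum_constant)

lemma sexp_add: "sexp GA GB N f S + sexp GA GB N g S = sexp GA GB N (\<lambda>T. f T + g T) S"
  unfolding sexp_def by (simp only: sum.distrib[symmetric] distrib_left)

lemma sexp_nonneg: "(\<And>T. T \<subseteq> vset N \<Longrightarrow> f T \<ge> 0) \<Longrightarrow> S \<subseteq> vset N \<Longrightarrow> sexp GA GB N f S \<ge> 0"
proof -
  assume f: "\<And>T. T \<subseteq> vset N \<Longrightarrow> f T \<ge> 0" and S: "S \<subseteq> vset N"
  show ?thesis unfolding sexp_def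
  proof (intro sum_nonneg mult_nonneg_nonneg)
    fix x y assume "y \<in> nbrs (if x \<in> S then GA else GB) N x"
    then have "y \<in> vset N" using nbrs_sub by blast
    then show "0 \<le> f (if x \<in> S then insert y S else S - {y})" using S by (intro f) auto
  qed auto
qed

lemma sexp_one:
  assumes "N > 0" "\<And>x. x \<in> vset N \<Longrightarrow> nbrs GA N x \<noteq> {} \<and> nbrs GB N x \<noteq> {}"
  shows "sexp GA GB N (\<lambda>_. 1) S = 1"
proof -
  have "sexp GA GB N (\<lambda>_. 1) S = (\<Sum>x\<in>vset N. 1 / real N)"
    unfolding sexp_def
  proof (rule sum.cong[OF refl])
    fix x assume "x \<in> vset N"
    then have ne: "nbrs (if x \<in> S then GA else GB) N x \<noteq> {}" using assms(2) by auto
    then have "card (nbrs (if x \<in> S then GA else GB) N x) > 0" by (simp add: card_gt_0_iff)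
    then show "(\<Sum>y\<in>nbrs (if x \<in> S then GA else GB) N x.
         1 / real N * (1 / real (card (nbrs (if x \<in> S then GA else GB) N x))) * 1) = 1 / real N"
      using ne by simp
  qed
  also have "\<dots> = 1" using assms(1) by simp
  finally show ?thesis .
qed

lemma sexp_cong:
  assumes S: "S \<subseteq> vset N" and fg: "\<And>T. T \<subseteq> vset N \<Longrightarrow> f T = g T"
  shows "sexp GA GB N f S = sexp GA GB N g S"
  unfolding sexp_def
proof (rule sum.cong[OF refl], rule sum.cong[OF refl])
  fix x y assume "y \<in> nbrs (if x \<in> S then GA else GB) N x"
  then have "y \<in> vset N" using nbrs_sub by blast
  then have "(if x \<in> S then insert y S else S - {y}) \<subseteq> vset N" using S by auto
  then show "1 / real N * (1 / real (card (nbrs (if x \<in> S then GA else GB) N x))) *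
         f (if x \<in> S then insert y S else S - {y}) =
         1 / real N * (1 / real (card (nbrs (if x \<in> S then GA else GB) N x))) *
         g (if x \<in> S then insert y S else S - {y})" using fg by simp
qed

lemma sq_sexp_nonneg:
  fixes \<phi> :: "nat set \<Rightarrow> real"
  assumes "T \<subseteq> vset N"
  shows "sexp GA GB N (\<lambda>T'. (\<phi> T' - \<phi> T)^2) T \<ge> 0"
  by (rule sexp_nonneg[OF _ assms]) simp

lemma generic_fix:
  assumes S: "S \<subseteq> vset N" and N: "N > 0"
    and deg: "\<And>x. x \<in> vset N \<Longrightarrow> nbrs GA N x \<noteq> {} \<and> nbrs GB N x \<noteq> {}"
    and harm: "\<And>S. S \<subseteq> vset N \<Longrightarrow> sexp GA GB N \<phi> S = \<phi> S"
    and bnd: "\<And>S. S \<subseteq> vset N \<Longrightarrow> 0 \<le> \<phi> S \<and> \<phi> S \<le> 1"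
    and ph0: "\<phi> {} = 0" and ph1: "\<phi> (vset N) = 1"
    and c: "c > 0"
    and var: "\<And>S. S \<subseteq> vset N \<Longrightarrow> S \<noteq> {} \<Longrightarrow> S \<noteq> vset N \<Longrightarrow>
                  sexp GA GB N (\<lambda>T. (\<phi> T - \<phi> S)^2) S \<ge> c"
  shows "fixation_prob_is GA GB N S (\<phi> S)"
proof -
  let ?V = "vset N"
  let ?E = "Ex GA GB N"
  let ?P = "moran_nstep GA GB N"
  define \<psi> where "\<psi> T = \<phi> T - \<phi> T ^ 2" for T
  define h where "h S = sexp GA GB N (\<lambda>T. (\<phi> T - \<phi> S)^2) S" for S
  have one: "sexp GA GB N (\<lambda>_. 1) S = 1" for S using sexp_one[OF N deg] by blast
  have Eharm: "?E n \<phi> S = \<phi> S" if "S \<subseteq> ?V" for n S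
    using that
  proof (induction n arbitrary: S)
    case 0 then show ?case by (simp add: Ex_0)
  next
    case (Suc n)
    have "?E (Suc n) \<phi> S = sexp GA GB N (?E n \<phi>) S" using Suc.prems by (rule Ex_Suc')
    also have "\<dots> = sexp GA GB N \<phi> S"
      by (rule sexp_cong[OF Suc.prems Suc.IH])
    also have "\<dots> = \<phi> S" using harm Suc.prems by blast
    finally show ?case .
  qed
  have hnn: "h T \<ge> 0" if "T \<subseteq> ?V" for T
    unfolding h_def by (rule sq_sexp_nonneg[OF that])
  have psi_step: "sexp GA GB N \<psi> S = \<psi> S - h S" if "S \<subseteq> ?V" for S
  proof -
    have "sexp GA GB N \<psi> S + h S = sexp GA GB N (\<lambda>T. \<psi> T + (\<phi> T - \<phi> S)^2) S"
      unfolding h_def by (rule sexp_add)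
    also have "\<dots> = sexp GA GB N (\<lambda>T. (1 - 2 * \<phi> S) * \<phi> T + \<phi> S ^ 2) S"
      unfolding \<psi>_def by (rule arg_cong[where f="\<lambda>f. sexp GA GB N f S"]) (simp add: fun_eq_iff algebra_simps power2_eq_square)
    also have "\<dots> = (1 - 2 * \<phi> S) * \<phi> S + \<phi> S ^ 2"
      by (subst sexp_lin) (simp add: one harm that)
    also have "\<dots> = \<psi> S" unfolding \<psi>_def by (simp add: algebra_simps power2_eq_square)
    finally show ?thesis by simp
  qed
  have Epsi: "?E n \<psi> S + (\<Sum>k<n. ?E k h S) = \<psi> S" if "S \<subseteq> ?V" for n S
    using that
  proof (induction n arbitrary: S)
    case 0 then show ?case by (simp add: Ex_0)
  next
    case (Suc n)
    have A: "?E (Suc n) \<psi> S = (\<Sum>U\<in>Pow ?V. moran_step GA GB N S U * ?E n \<psi> U)"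
      by (rule Ex_Suc)
    have "(\<Sum>k<Suc n. ?E k h S) = ?E 0 h S + (\<Sum>k<n. ?E (Suc k) h S)"
      by (rule sum.lessThan_Suc_shift)
    also have "\<dots> = h S + (\<Sum>k<n. \<Sum>U\<in>Pow ?V. moran_step GA GB N S U * ?E k h U)"
      by (simp only: Ex_0[OF Suc.prems] Ex_Suc)
    also have "(\<Sum>k<n. \<Sum>U\<in>Pow ?V. moran_step GA GB N S U * ?E k h U)
          = (\<Sum>U\<in>Pow ?V. \<Sum>k<n. moran_step GA GB N S U * ?E k h U)" by (rule sum.swap)
    also have "\<dots> = (\<Sum>U\<in>Pow ?V. moran_step GA GB N S U * (\<Sum>k<n. ?E k h U))"
      by (simp only: sum_distrib_left)
    finally have B: "(\<Sum>k<Suc n. ?E k h S) = h S + (\<Sum>U\<in>Pow ?V. moran_step GA GB N S U * (\<Sum>k<n. ?E k h U))" .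
    have "(\<Sum>U\<in>Pow ?V. moran_step GA GB N S U * ?E n \<psi> U)
        + (\<Sum>U\<in>Pow ?V. moran_step GA GB N S U * (\<Sum>k<n. ?E k h U))
        = (\<Sum>U\<in>Pow ?V. moran_step GA GB N S U * (?E n \<psi> U + (\<Sum>k<n. ?E k h U)))"
      by (simp only: sum.distrib[symmetric] distrib_left)
    also have "\<dots> = (\<Sum>U\<in>Pow ?V. moran_step GA GB N S U * \<psi> U)"
    proof (rule sum.cong[OF refl])
      fix U assume "U \<in> Pow ?V"
      then have "?E n \<psi> U + (\<Sum>k<n. ?E k h U) = \<psi> U" using Suc.IH by blast
      then show "moran_step GA GB N S U * (?E n \<psi> U + (\<Sum>k<n. ?E k h U)) = moran_step GA GB N S U * \<psi> U"
        by simp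
    qed
    also have "\<dots> = sexp GA GB N \<psi> S" by (rule step_sum[OF Suc.prems])
    also have "\<dots> = \<psi> S - h S" by (rule psi_step[OF Suc.prems])
    finally show ?case using A B by linarith
  qed
  have psinn: "\<psi> T \<ge> 0" "\<psi> T \<le> 1" if "T \<subseteq> ?V" for T
  proof -
    have a: "0 \<le> \<phi> T ^ 2" by simp
    have b: "\<phi> T ^ 2 \<le> \<phi> T"
      using bnd[OF that] mult_left_le_one_le[of "\<phi> T" "\<phi> T"] by (simp add: power2_eq_square)
    show "\<psi> T \<ge> 0" "\<psi> T \<le> 1" using a b bnd[OF that] unfolding \<psi>_def by linarith+
  qed
  define Tr where "Tr = Pow ?V - {{}, ?V}"
  define m where "m k = (\<Sum>T\<in>Tr. ?P k S T)" for k
  have mnn: "m k \<ge> 0" for k unfolding m_def by (intro sum_nonneg nstep_nonneg)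
  have finTr: "finite Tr" unfolding Tr_def by simp
  have TrP: "Tr \<subseteq> Pow ?V" unfolding Tr_def by auto
  have cm: "c * m k \<le> ?E k h S" for k
  proof -
    have "c * m k = (\<Sum>T\<in>Tr. ?P k S T * c)" unfolding m_def by (simp add: sum_distrib_left mult.commute)
    also have "\<dots> \<le> (\<Sum>T\<in>Tr. ?P k S T * h T)"
    proof (rule sum_mono)
      fix T assume "T \<in> Tr"
      then have "c \<le> h T" unfolding h_def Tr_def by (intro var) auto
      then show "?P k S T * c \<le> ?P k S T * h T" by (intro mult_left_mono nstep_nonneg)
    qed
    also have "\<dots> \<le> ?E k h S" unfolding Ex_def
      by (rule sum_mono2[OF _ TrP]) (auto intro!: mult_nonneg_nonneg nstep_nonneg hnn)
    finally show ?thesis .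
  qed
  have Enn: "?E n \<psi> S \<ge> 0" for n unfolding Ex_def
    by (intro sum_nonneg mult_nonneg_nonneg nstep_nonneg psinn) auto
  have msum: "(\<Sum>k<n. m k) \<le> 1 / c" for n
  proof -
    have "c * (\<Sum>k<n. m k) \<le> (\<Sum>k<n. ?E k h S)"
      by (simp add: sum_distrib_left sum_mono cm)
    also have "\<dots> \<le> 1" using Epsi[OF S, of n] Enn[of n] psinn(2)[OF S] by linarith
    finally show ?thesis using c by (simp add: field_simps mult.commute)
  qed
  have "summable m" by (rule summableI_nonneg_bounded[OF mnn msum])
  then have m0: "m \<longlonglongrightarrow> 0" by (rule summable_LIMSEQ_zero)
  have ne: "{} \<noteq> ?V" using N by (auto simp: vset_def)
  have split: "?E n \<phi> S = ?P n S ?V + (\<Sum>T\<in>Tr. ?P n S T * \<phi> T)" for n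
  proof -
    have "Pow ?V = insert {} (insert ?V Tr)" unfolding Tr_def by auto
    moreover have "{} \<notin> insert ?V Tr" "?V \<notin> Tr" using ne unfolding Tr_def by auto
    ultimately show ?thesis unfolding Ex_def using finTr by (simp add: ph0 ph1)
  qed
  have low: "\<phi> S - m n \<le> ?P n S ?V" for n
  proof -
    have "(\<Sum>T\<in>Tr. ?P n S T * \<phi> T) \<le> m n" unfolding m_def
    proof (rule sum_mono)
      fix T assume "T \<in> Tr"
      then have "T \<subseteq> ?V" using TrP by auto
      then show "?P n S T * \<phi> T \<le> ?P n S T"
        using bnd[of T] nstep_nonneg[of GA GB N n S T] by (intro mult_right_le_one_le) auto
    qed
    then show ?thesis using split[of n] Eharm[OF S, of n] by linarith
  qed
  have up: "?P n S ?V \<le> \<phi> S" for n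
  proof -
    have "(\<Sum>T\<in>Tr. ?P n S T * \<phi> T) \<ge> 0"
    proof (rule sum_nonneg)
      fix T assume "T \<in> Tr"
      then have "T \<subseteq> ?V" using TrP by auto
      then show "?P n S T * \<phi> T \<ge> 0"
        using bnd[of T] nstep_nonneg[of GA GB N n S T] by (intro mult_nonneg_nonneg) auto
    qed
    then show ?thesis using split[of n] Eharm[OF S, of n] by linarith
  qed
  have "(\<lambda>n. \<phi> S - m n) \<longlonglongrightarrow> \<phi> S - 0" by (intro tendsto_intros m0)
  then have l: "(\<lambda>n. \<phi> S - m n) \<longlonglongrightarrow> \<phi> S" by simp
  have "(\<lambda>n. ?P n S ?V) \<longlonglongrightarrow> \<phi> S"
    by (rule tendsto_sandwich[OF _ _ l tendsto_const]) (use low up in \<open>auto intro: always_eventually\<close>)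
  then show ?thesis unfolding fixation_prob_is_def .
qed



definition phi :: "(nat set \<Rightarrow> real) \<Rightarrow> nat \<Rightarrow> nat set \<Rightarrow> real" where
  "phi w N T = ((real N - 2) * real (card T) + w T) / (real N - 1)^2"

definition wA :: "nat \<Rightarrow> nat \<Rightarrow> nat set \<Rightarrow> real" where
  "wA u v T = (if u \<in> T \<and> v \<in> T then 1 else 0)"

definition wB :: "nat \<Rightarrow> nat \<Rightarrow> nat set \<Rightarrow> real" where
  "wB u v T = (if u \<in> T \<or> v \<in> T then 1 else 0)"

lemma sexp_diff:
  "sexp GA GB N f S - c * sexp GA GB N (\<lambda>_. 1) S =
   (\<Sum>x\<in>vset N. (1 / real N) * (1 / real (card (nbrs (if x \<in> S then GA else GB) N x))) *
      (\<Sum>y\<in>nbrs (if x \<in> S then GA else GB) N x. f (if x \<in> S then insert y S else S - {y}) - c))"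
  unfolding sexp_def
  by (simp add: sum_subtractf[symmetric] sum_distrib_left right_diff_distrib del: sum_constant)

lemma inner_red:
  fixes f :: "nat set \<Rightarrow> real"
  assumes "\<And>y. G x y \<longleftrightarrow> x \<noteq> y \<and> Q y"
  shows "(\<Sum>y\<in>nbrs G N x. f (if x \<in> S then insert y S else S - {y}) - f S)
       = (\<Sum>y\<in>vset N. if Q y then f (if x \<in> S then insert y S else S - {y}) - f S else 0)"
proof -
  have "(\<Sum>y\<in>nbrs G N x. f (if x \<in> S then insert y S else S - {y}) - f S)
      = (\<Sum>y\<in>vset N. if G x y then f (if x \<in> S then insert y S else S - {y}) - f S else 0)"
    unfolding nbrs_def by (rule sum.inter_filter) simp
  also have "\<dots> = (\<Sum>y\<in>vset N. if Q y then f (if x \<in> S then insert y S else S - {y}) - f S else 0)"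
    by (rule sum.cong[OF refl]) (auto simp: assms insert_absorb)
  finally show ?thesis .
qed

lemma split4:
  assumes "u \<in> vset N" "v \<in> vset N" "u \<noteq> v"
  shows "sum f (vset N) = f u + f v + sum f (vset N \<inter> S - {u, v}) + sum f (vset N - S - {u, v})"
proof -
  have "vset N = insert u (insert v ((vset N \<inter> S - {u, v}) \<union> (vset N - S - {u, v})))"
    using assms by auto
  then have "sum f (vset N) = sum f (insert u (insert v ((vset N \<inter> S - {u, v}) \<union> (vset N - S - {u, v}))))"
    by simp
  also have "\<dots> = f u + f v + sum f (vset N \<inter> S - {u, v}) + sum f (vset N - S - {u, v})"
  proof -
    let ?A = "vset N \<inter> S - {u, v}" and ?B = "vset N - S - {u, v}"
    have "sum f (insert u (insert v (?A \<union> ?B))) = f u + sum f (insert v (?A \<union> ?B))"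
      by (rule sum.insert) (use assms in auto)
    also have "sum f (insert v (?A \<union> ?B)) = f v + sum f (?A \<union> ?B)"
      by (rule sum.insert) (use assms in auto)
    also have "sum f (?A \<union> ?B) = sum f ?A + sum f ?B"
      by (rule sum.union_disjoint) auto
    finally show ?thesis by (simp only: add.assoc)
  qed
  finally show ?thesis by simp
qed

lemma card_int2:
  assumes "finite A" "u \<noteq> v"
  shows "real (card (A - {u, v})) = real (card A) - (if u \<in> A then 1 else 0) - (if v \<in> A then 1 else 0)"
proof -
  have e: "card A = card (A \<inter> {u, v}) + card (A - {u, v})" by (rule card_Int_Diff[OF assms(1)])
  have "real (card (A \<inter> {u, v})) = (if u \<in> A then 1 else 0) + (if v \<in> A then 1 else 0)"
    using assms(2) by (cases "u \<in> A"; cases "v \<in> A") (auto simp: Int_insert_right)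
  then show ?thesis using e by (simp add: algebra_simps)
qed

lemma card_blk1:
  assumes "u \<noteq> v"
  shows "real (card (vset N \<inter> S - {u, v})) = real (card (vset N \<inter> S))
     - (if u \<in> vset N \<inter> S then 1 else 0) - (if v \<in> vset N \<inter> S then 1 else 0)"
  by (rule card_int2) (use assms in auto)

lemma card_blk2:
  assumes "u \<noteq> v" "u \<in> vset N" "v \<in> vset N"
  shows "real (card (vset N - S - {u, v})) = real N - real (card (vset N \<inter> S))
     - (if u \<in> S then 0 else 1) - (if v \<in> S then 0 else 1)"
proof -
  have e: "card (vset N) = card (vset N \<inter> S) + card (vset N - S)" by (rule card_Int_Diff) simp
  have "real (card (vset N - S - {u, v})) = real (card (vset N - S))
     - (if u \<in> vset N - S then 1 else 0) - (if v \<in> vset N - S then 1 else 0)"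
    by (rule card_int2) (use assms in auto)
  moreover have "real (card (vset N - S)) = real N - real (card (vset N \<inter> S))"
    using e by simp
  ultimately show ?thesis using assms by auto
qed

lemma card_rm: "finite S \<Longrightarrow> y \<in> S \<Longrightarrow> real (card (S - {y})) = real (card S) - 1"
proof -
  assume "finite S" "y \<in> S"
  then have "card S \<ge> 1" by (metis One_nat_def Suc_leI card_gt_0_iff empty_iff)
  then show ?thesis using \<open>y \<in> S\<close> by (simp add: card_Diff_singleton of_nat_diff)
qed

lemma notin_diff: "y \<notin> S \<Longrightarrow> S - {y} = S" by auto

lemma card_blk1':
  assumes "u \<noteq> v" "S \<subseteq> vset N" "u \<in> vset N" "v \<in> vset N"
  shows "real (card (vset N \<inter> S - {u, v})) = real (card S)
     - (if u \<in> S then 1 else 0) - (if v \<in> S then 1 else 0)"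
proof -
  have "vset N \<inter> S = S" using assms by auto
  then show ?thesis using card_blk1[OF assms(1), of N S] assms by simp
qed

lemma card_blk2':
  assumes "u \<noteq> v" "S \<subseteq> vset N" "u \<in> vset N" "v \<in> vset N"
  shows "real (card (vset N - S - {u, v})) = real N - real (card S)
     - (if u \<in> S then 0 else 1) - (if v \<in> S then 0 else 1)"
proof -
  have "vset N \<inter> S = S" using assms by auto
  then show ?thesis using card_blk2[OF assms(1,3,4), of S] by simp
qed

lemma nbrsK: "nbrs complete_graph N x = vset N - {x}"
  by (auto simp: nbrs_def complete_graph_def)

lemma card_nbrsK: "x \<in> vset N \<Longrightarrow> real (card (nbrs complete_graph N x)) = real N - 1"
proof -
  assume x: "x \<in> vset N"
  then have "N \<ge> 1" by (auto simp: vset_def)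
  then show ?thesis unfolding nbrsK using x by (simp add: of_nat_diff)
qed

lemma nbrsM: "u \<noteq> v \<Longrightarrow> nbrs (complete_minus_edge u v) N x =
   vset N - {x} - (if x = u then {v} else if x = v then {u} else {})"
  by (auto simp: nbrs_def complete_minus_edge_def doubleton_eq_iff)

lemma card_nbrsM:
  assumes "u \<in> vset N" "v \<in> vset N" "u \<noteq> v" "x \<in> vset N"
  shows "real (card (nbrs (complete_minus_edge u v) N x)) = (if x = u \<or> x = v then real N - 2 else real N - 1)"
proof -
  have "{u, v} \<subseteq> vset N" using assms by auto
  then have "card {u, v} \<le> N" using card_mono[of "vset N" "{u, v}"] by simp
  then have N2: "N \<ge> 2" using assms(3) by simp
  show ?thesis unfolding nbrsM[OF assms(3)] using assms N2 by (auto simp: of_nat_diff)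
qed

lemma adjK: "complete_graph x y \<longleftrightarrow> x \<noteq> y \<and> True" by (simp add: complete_graph_def)
lemma adjM: "complete_minus_edge u v x y \<longleftrightarrow> x \<noteq> y \<and> \<not> (x = u \<and> y = v) \<and> \<not> (x = v \<and> y = u)"
  by (auto simp: complete_minus_edge_def doubleton_eq_iff)

definition blk1 :: "nat \<Rightarrow> nat \<Rightarrow> nat \<Rightarrow> nat set \<Rightarrow> nat set" where
  "blk1 N u v S = vset N \<inter> S - {u, v}"
definition blk2 :: "nat \<Rightarrow> nat \<Rightarrow> nat \<Rightarrow> nat set \<Rightarrow> nat set" where
  "blk2 N u v S = vset N - S - {u, v}"

lemma mem_blk1[simp]: "y \<in> blk1 N u v S \<longleftrightarrow> y \<in> vset N \<and> y \<in> S \<and> y \<noteq> u \<and> y \<noteq> v"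
  by (auto simp: blk1_def)
lemma mem_blk2[simp]: "y \<in> blk2 N u v S \<longleftrightarrow> y \<in> vset N \<and> y \<notin> S \<and> y \<noteq> u \<and> y \<noteq> v"
  by (auto simp: blk2_def)

lemma split4b:
  assumes "u \<in> vset N" "v \<in> vset N" "u \<noteq> v"
  shows "sum f (vset N) = f u + f v + sum f (blk1 N u v S) + sum f (blk2 N u v S)"
  unfolding blk1_def blk2_def by (rule split4[OF assms])

lemma card_b1:
  assumes "u \<noteq> v" "S \<subseteq> vset N" "u \<in> vset N" "v \<in> vset N"
  shows "real (card (blk1 N u v S)) = real (card S)
     - (if u \<in> S then 1 else 0) - (if v \<in> S then 1 else 0)"
  unfolding blk1_def by (rule card_blk1'[OF assms])

lemma card_b2:
  assumes "u \<noteq> v" "S \<subseteq> vset N" "u \<in> vset N" "v \<in> vset N"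
  shows "real (card (blk2 N u v S)) = real N - real (card S)
     - (if u \<in> S then 0 else 1) - (if v \<in> S then 0 else 1)"
  unfolding blk2_def by (rule card_blk2'[OF assms])

lemma harm_from:
  fixes g :: "nat set \<Rightarrow> real"
  assumes one: "sexp GA GB N (\<lambda>_. 1) S = 1"
    and zero: "(\<Sum>x\<in>vset N. (1 / real (card (nbrs (if x \<in> S then GA else GB) N x))) *
      (\<Sum>y\<in>nbrs (if x \<in> S then GA else GB) N x. g (if x \<in> S then insert y S else S - {y}) - g S)) = 0"
  shows "sexp GA GB N (\<lambda>T. g T / C) S = g S / C"
proof -
  have "sexp GA GB N (\<lambda>T. g T / C) S - g S / C * sexp GA GB N (\<lambda>_. 1) S =
   (\<Sum>x\<in>vset N. (1 / real N) * (1 / real (card (nbrs (if x \<in> S then GA else GB) N x))) *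
      (\<Sum>y\<in>nbrs (if x \<in> S then GA else GB) N x. g (if x \<in> S then insert y S else S - {y}) / C - g S / C))"
    by (rule sexp_diff)
  also have "\<dots> = (\<Sum>x\<in>vset N. (1 / (real N * C)) * ((1 / real (card (nbrs (if x \<in> S then GA else GB) N x))) *
      (\<Sum>y\<in>nbrs (if x \<in> S then GA else GB) N x. g (if x \<in> S then insert y S else S - {y}) - g S)))"
  proof (rule sum.cong[OF refl])
    fix x
    let ?d = "real (card (nbrs (if x \<in> S then GA else GB) N x))"
    let ?A = "nbrs (if x \<in> S then GA else GB) N x"
    have "(\<Sum>y\<in>?A. g (if x \<in> S then insert y S else S - {y}) / C - g S / C)
        = (\<Sum>y\<in>?A. g (if x \<in> S then insert y S else S - {y}) - g S) / C"
      by (simp add: diff_divide_distrib[symmetric] sum_divide_distrib[symmetric])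
    then show "(1 / real N) * (1 / ?d) * (\<Sum>y\<in>?A. g (if x \<in> S then insert y S else S - {y}) / C - g S / C)
       = (1 / (real N * C)) * ((1 / ?d) * (\<Sum>y\<in>?A. g (if x \<in> S then insert y S else S - {y}) - g S))"
      by simp
  qed
  also have "\<dots> = (1 / (real N * C)) * (\<Sum>x\<in>vset N. (1 / real (card (nbrs (if x \<in> S then GA else GB) N x))) *
      (\<Sum>y\<in>nbrs (if x \<in> S then GA else GB) N x. g (if x \<in> S then insert y S else S - {y}) - g S))"
    by (rule sum_distrib_left[symmetric])
  also have "\<dots> = 0" using zero by simp
  finally show ?thesis using one by simp
qed



lemma sexp_ge_term:
  fixes f :: "nat set \<Rightarrow> real"
  assumes f: "\<And>T. T \<subseteq> vset N \<Longrightarrow> f T \<ge> 0" and S: "S \<subseteq> vset N" and x: "x \<in> vset N"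
    and y: "y \<in> nbrs (if x \<in> S then GA else GB) N x"
  shows "(1 / real N) * (1 / real (card (nbrs (if x \<in> S then GA else GB) N x))) *
           f (if x \<in> S then insert y S else S - {y}) \<le> sexp GA GB N f S"
proof -
  let ?A = "\<lambda>x. nbrs (if x \<in> S then GA else GB) N x"
  let ?t = "\<lambda>x y. (1 / real N) * (1 / real (card (?A x))) * f (if x \<in> S then insert y S else S - {y})"
  have tnn: "?t x' y' \<ge> 0" if "y' \<in> ?A x'" for x' y'
  proof -
    have "y' \<in> vset N" using that nbrs_sub by blast
    then have "(if x' \<in> S then insert y' S else S - {y'}) \<subseteq> vset N" using S by auto
    then show ?thesis using f by (intro mult_nonneg_nonneg) auto
  qed
  have "?t x y \<le> (\<Sum>y'\<in>?A x. ?t x y')"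
    by (rule member_le_sum[OF y]) (use tnn in auto)
  also have "\<dots> \<le> (\<Sum>x'\<in>vset N. \<Sum>y'\<in>?A x'. ?t x' y')"
  proof (rule member_le_sum[OF x, where f="\<lambda>x'. \<Sum>y'\<in>?A x'. ?t x' y'"])
    fix x' assume "x' \<in> vset N - {x}"
    show "0 \<le> (\<Sum>y'\<in>?A x'. ?t x' y')" by (rule sum_nonneg) (rule tnn)
  qed simp
  also have "\<dots> = sexp GA GB N f S" unfolding sexp_def ..
  finally show ?thesis .
qed

lemma card_le_N: "T \<subseteq> vset N \<Longrightarrow> card T \<le> N"
  using card_mono[of "vset N" T] by simp

lemma card_lt_N: "T \<subseteq> vset N \<Longrightarrow> u \<in> vset N \<Longrightarrow> u \<notin> T \<Longrightarrow> card T \<le> N - 1"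
proof -
  assume T: "T \<subseteq> vset N" and u: "u \<in> vset N" "u \<notin> T"
  then have "T \<subseteq> vset N - {u}" by auto
  then have "card T \<le> card (vset N - {u})" by (intro card_mono) auto
  then show ?thesis using u by simp
qed

lemma phi_bounds:
  assumes N: "N \<ge> 3" and u: "u \<in> vset N" and v: "v \<in> vset N" and T: "T \<subseteq> vset N"
    and w: "w = wA u v \<or> w = wB u v"
  shows "0 \<le> phi w N T \<and> phi w N T \<le> 1"
proof -
  have n3: "real N \<ge> 3" using N by simp
  have k: "real (card T) \<le> real N" using card_le_N[OF T] by simp
  have w01: "0 \<le> w T" "w T \<le> 1" using w by (auto simp: wA_def wB_def)
  have pos: "(real N - 1)^2 > 0" using n3 by simp
  have num0: "0 \<le> (real N - 2) * real (card T) + w T" using n3 w01 by simp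
  have num1: "(real N - 2) * real (card T) + w T \<le> (real N - 1)^2"
  proof (cases "w T = 1")
    case True
    have "(real N - 2) * real (card T) \<le> (real N - 2) * real N" using k n3 by (intro mult_left_mono) auto
    then show ?thesis using True by (simp add: power2_eq_square algebra_simps)
  next
    case False
    then have "w T = 0" using w by (auto simp: wA_def wB_def split: if_splits)
    moreover have "(real N - 2) * real (card T) \<le> (real N - 2) * real N" using k n3 by (intro mult_left_mono) auto
    ultimately show ?thesis by (simp add: power2_eq_square algebra_simps)
  qed
  show ?thesis unfolding phi_def using num0 num1 pos by (simp add: divide_le_eq_1)
qed

lemma phi_empty: "phi w N {} = 0" if "w {} = 0" using that by (simp add: phi_def)

lemma phi_full:
  assumes N: "N \<ge> 3" and u: "u \<in> vset N" and v: "v \<in> vset N" and w: "w (vset N) = 1"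
  shows "phi w N (vset N) = 1"
proof -
  have "(real N - 1)^2 \<noteq> 0" using N by simp
  moreover have "(real N - 2) * real N + 1 = (real N - 1)^2" by (simp add: power2_eq_square algebra_simps)
  ultimately show ?thesis unfolding phi_def using w by simp
qed

lemma sq_bound:
  fixes e a :: real
  assumes "e \<ge> 1" "a > 0"
  shows "(e / a)^2 \<ge> 1 / a^2"
proof -
  have "e^2 \<ge> 1" using assms(1) by (simp add: one_le_power)
  then show ?thesis using assms(2) by (simp add: power_divide divide_right_mono)
qed

definition cst :: "nat \<Rightarrow> real" where
  "cst N = 1 / (real N * (real N - 1) * ((real N - 1)^2)^2)"

lemma cst_pos: "N \<ge> 3 \<Longrightarrow> cst N > 0"
  unfolding cst_def by simp

lemma var1:
  assumes N: "N \<ge> 3" and u: "u \<in> vset N" and v: "v \<in> vset N" and uv: "u \<noteq> v"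
    and S: "S \<subseteq> vset N" and ne: "S \<noteq> {}" and nf: "S \<noteq> vset N"
  shows "sexp (complete_minus_edge u v) complete_graph N
           (\<lambda>T. (phi (wA u v) N T - phi (wA u v) N S)^2) S \<ge> cst N"
proof -
  let ?f = "phi (wA u v) N"
  have finS: "finite S" by (rule finite_subset[OF S finite_vset])
  obtain x where x: "x \<in> vset N" "x \<notin> S" using S nf by blast
  obtain y where y: "y \<in> S" using ne by blast
  have yV: "y \<in> vset N" using y S by blast
  have ynb: "y \<in> nbrs (if x \<in> S then complete_minus_edge u v else complete_graph) N x"
    using x y yV by (auto simp: nbrs_def complete_graph_def)
  have n3: "real N \<ge> 3" using N by simp
  define d where "d = wA u v S - wA u v (S - {y})"
  have d0: "d \<ge> 0" unfolding d_def wA_def by auto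
  have e: "?f (S - {y}) - ?f S = - ((real N - 2 + d) / (real N - 1)^2)"
    unfolding phi_def d_def using n3
    by (simp add: card_rm[OF finS y] diff_divide_distrib[symmetric] minus_divide_left algebra_simps
        del: card_Diff_insert)
  have sq: "(?f (S - {y}) - ?f S)^2 \<ge> 1 / ((real N - 1)^2)^2"
    unfolding e power2_minus using d0 n3 by (intro sq_bound) auto
  have "cst N \<le> (1 / real N) * (1 / (real N - 1)) * (1 / ((real N - 1)^2)^2)"
    unfolding cst_def by simp
  also have "\<dots> \<le> (1 / real N) * (1 / (real N - 1)) * (?f (S - {y}) - ?f S)^2"
    using sq n3 by (intro mult_left_mono) auto
  also have "\<dots> = (1 / real N) * (1 / real (card (nbrs (if x \<in> S then complete_minus_edge u v else complete_graph) N x))) *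
           (\<lambda>T. (?f T - ?f S)^2) (if x \<in> S then insert y S else S - {y})"
    using x card_nbrsK[OF x(1)] by simp
  also have "\<dots> \<le> sexp (complete_minus_edge u v) complete_graph N (\<lambda>T. (?f T - ?f S)^2) S"
    by (rule sexp_ge_term[OF _ S x(1) ynb]) simp
  finally show ?thesis .
qed

lemma var2:
  assumes N: "N \<ge> 3" and u: "u \<in> vset N" and v: "v \<in> vset N" and uv: "u \<noteq> v"
    and S: "S \<subseteq> vset N" and ne: "S \<noteq> {}" and nf: "S \<noteq> vset N"
  shows "sexp complete_graph (complete_minus_edge u v) N
           (\<lambda>T. (phi (wB u v) N T - phi (wB u v) N S)^2) S \<ge> cst N"
proof -
  let ?f = "phi (wB u v) N"
  have finS: "finite S" by (rule finite_subset[OF S finite_vset])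
  obtain y where y: "y \<in> vset N" "y \<notin> S" using S nf by blast
  obtain x where x: "x \<in> S" using ne by blast
  have xV: "x \<in> vset N" using x S by blast
  have ynb: "y \<in> nbrs (if x \<in> S then complete_graph else complete_minus_edge u v) N x"
    using x y by (auto simp: nbrs_def complete_graph_def)
  have n3: "real N \<ge> 3" using N by simp
  define d where "d = wB u v (insert y S) - wB u v S"
  have d0: "d \<ge> 0" unfolding d_def wB_def by auto
  have e: "?f (insert y S) - ?f S = (real N - 2 + d) / (real N - 1)^2"
    unfolding phi_def d_def using finS y
    by (simp add: diff_divide_distrib[symmetric] algebra_simps)
  have sq: "(?f (insert y S) - ?f S)^2 \<ge> 1 / ((real N - 1)^2)^2"
    unfolding e using d0 n3 by (intro sq_bound) auto
  have "cst N \<le> (1 / real N) * (1 / (real N - 1)) * (1 / ((real N - 1)^2)^2)"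
    unfolding cst_def by simp
  also have "\<dots> \<le> (1 / real N) * (1 / (real N - 1)) * (?f (insert y S) - ?f S)^2"
    using sq n3 by (intro mult_left_mono) auto
  also have "\<dots> = (1 / real N) * (1 / real (card (nbrs (if x \<in> S then complete_graph else complete_minus_edge u v) N x))) *
           (\<lambda>T. (?f T - ?f S)^2) (if x \<in> S then insert y S else S - {y})"
    using x card_nbrsK[OF xV] by simp
  also have "\<dots> \<le> sexp complete_graph (complete_minus_edge u v) N (\<lambda>T. (?f T - ?f S)^2) S"
    by (rule sexp_ge_term[OF _ S xV ynb]) simp
  finally show ?thesis .
qed

lemma harm1:
  assumes N: "N \<ge> 3" and u: "u \<in> vset N" and v: "v \<in> vset N" and uv: "u \<noteq> v"
    and S: "S \<subseteq> vset N"
  shows "sexp (complete_minus_edge u v) complete_graph N (phi (wA u v) N) S = phi (wA u v) N S"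
proof -
  let ?M = "complete_minus_edge u v" and ?K = complete_graph
  let ?f = "phi (wA u v) N"
  have finS: "finite S" by (rule finite_subset[OF S finite_vset])
  have ne: "nbrs ?M N x \<noteq> {} \<and> nbrs ?K N x \<noteq> {}" if "x \<in> vset N" for x
  proof -
    have "real (card (nbrs ?M N x)) > 0" "real (card (nbrs ?K N x)) > 0"
      using card_nbrsM[OF u v uv that] card_nbrsK[OF that] N by auto
    then show ?thesis by auto
  qed
  have one: "sexp ?M ?K N (\<lambda>_. 1) S = 1" by (rule sexp_one) (use N ne in auto)
  have inner: "(\<Sum>y\<in>nbrs (if x \<in> S then ?M else ?K) N x. ?f (if x \<in> S then insert y S else S - {y}) - ?f S)
     = (\<Sum>y\<in>vset N. if (x \<in> S \<longrightarrow> \<not> (x = u \<and> y = v) \<and> \<not> (x = v \<and> y = u))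
          then ?f (if x \<in> S then insert y S else S - {y}) - ?f S else 0)" for x
    by (rule inner_red) (auto simp: adjM adjK)
  have nz: "real N - 1 \<noteq> 0" "real N - 2 \<noteq> 0" "real N \<noteq> 0" "real N * real N - real N * 2 + 1 \<noteq> 0"
     "1 + real N * real N - real N * 2 \<noteq> 0" "2 + real N * real N - real N * 3 \<noteq> 0"
     "1 + real N * real N \<noteq> real N * 2" "2 + real N * real N \<noteq> real N * 3"
  proof -
    have n3: "real N \<ge> 3" using N by simp
    then have p: "(real N - 1) * (real N - 1) > 0" by simp
    have e: "(real N - 1) * (real N - 1) = real N * real N - real N * 2 + 1" by (simp add: algebra_simps)
    have p2: "(real N - 1) * (real N - 2) > 0" using n3 by simp
    have e2: "(real N - 1) * (real N - 2) = 2 + real N * real N - real N * 3" by (simp add: algebra_simps)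
    show "real N - 1 \<noteq> 0" "real N - 2 \<noteq> 0" "real N \<noteq> 0" "real N * real N - real N * 2 + 1 \<noteq> 0"
     "1 + real N * real N - real N * 2 \<noteq> 0" "2 + real N * real N - real N * 3 \<noteq> 0"
     "1 + real N * real N \<noteq> real N * 2" "2 + real N * real N \<noteq> real N * 3"
      using n3 p e p2 e2 by linarith+
  qed
  let ?g = "\<lambda>T. (real N - 2) * real (card T) + wA u v T"
  have fg: "?f = (\<lambda>T. ?g T / (real N - 1)^2)" by (simp add: fun_eq_iff phi_def)
  have inner': "(\<Sum>y\<in>nbrs (if x \<in> S then ?M else ?K) N x. ?g (if x \<in> S then insert y S else S - {y}) - ?g S)
     = (\<Sum>y\<in>vset N. if (x \<in> S \<longrightarrow> \<not> (x = u \<and> y = v) \<and> \<not> (x = v \<and> y = u))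
          then ?g (if x \<in> S then insert y S else S - {y}) - ?g S else 0)" for x
    by (rule inner_red) (auto simp: adjM adjK)
  have i1: "inverse (real N - 1) * (real N - 1) = 1" and i2: "inverse (real N - 2) * (real N - 2) = 1"
    using nz by auto
  have "(\<Sum>x\<in>vset N. (1 / real (card (nbrs (if x \<in> S then ?M else ?K) N x))) *
      (\<Sum>y\<in>nbrs (if x \<in> S then ?M else ?K) N x. ?g (if x \<in> S then insert y S else S - {y}) - ?g S)) = 0"
    unfolding inner' unfolding wA_def
    apply (cases "u \<in> S"; cases "v \<in> S")
    apply (simp_all add: split4b[OF u v uv, where S=S] card_b1[OF uv S u v] card_b2[OF uv S u v]
          card_nbrsM[OF u v uv] card_nbrsK card_insert_if card_rm notin_diff insert_absorb
          u v uv not_sym[OF uv] S finS N del: card_Diff_insert)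
    apply (simp_all add: divide_inverse)
    subgoal by (((erule thin_rl)+, insert i1 i2, algebra) | simp add: algebra_simps)
    subgoal by (((erule thin_rl)+, insert i1 i2, algebra) | simp add: algebra_simps)
    subgoal by (((erule thin_rl)+, insert i1 i2, algebra) | simp add: algebra_simps)
    subgoal by (((erule thin_rl)+, insert i1 i2, algebra) | simp add: algebra_simps)
    done
  then show ?thesis unfolding fg by (rule harm_from[OF one])
qed


lemma harm2:
  assumes N: "N \<ge> 3" and u: "u \<in> vset N" and v: "v \<in> vset N" and uv: "u \<noteq> v"
    and S: "S \<subseteq> vset N"
  shows "sexp complete_graph (complete_minus_edge u v) N (phi (wB u v) N) S = phi (wB u v) N S"
proof -
  let ?M = "complete_minus_edge u v" and ?K = complete_graph
  let ?f = "phi (wB u v) N"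
  have finS: "finite S" by (rule finite_subset[OF S finite_vset])
  have ne: "nbrs ?M N x \<noteq> {} \<and> nbrs ?K N x \<noteq> {}" if "x \<in> vset N" for x
  proof -
    have "real (card (nbrs ?M N x)) > 0" "real (card (nbrs ?K N x)) > 0"
      using card_nbrsM[OF u v uv that] card_nbrsK[OF that] N by auto
    then show ?thesis by auto
  qed
  have one: "sexp ?K ?M N (\<lambda>_. 1) S = 1" by (rule sexp_one) (use N ne in auto)
  have inner: "(\<Sum>y\<in>nbrs (if x \<in> S then ?K else ?M) N x. ?f (if x \<in> S then insert y S else S - {y}) - ?f S)
     = (\<Sum>y\<in>vset N. if (x \<notin> S \<longrightarrow> \<not> (x = u \<and> y = v) \<and> \<not> (x = v \<and> y = u))
          then ?f (if x \<in> S then insert y S else S - {y}) - ?f S else 0)" for x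
    by (rule inner_red) (auto simp: adjM adjK)
  have nz: "real N - 1 \<noteq> 0" "real N - 2 \<noteq> 0" "real N \<noteq> 0" "real N * real N - real N * 2 + 1 \<noteq> 0"
     "1 + real N * real N - real N * 2 \<noteq> 0" "2 + real N * real N - real N * 3 \<noteq> 0"
     "1 + real N * real N \<noteq> real N * 2" "2 + real N * real N \<noteq> real N * 3"
  proof -
    have n3: "real N \<ge> 3" using N by simp
    then have p: "(real N - 1) * (real N - 1) > 0" by simp
    have e: "(real N - 1) * (real N - 1) = real N * real N - real N * 2 + 1" by (simp add: algebra_simps)
    have p2: "(real N - 1) * (real N - 2) > 0" using n3 by simp
    have e2: "(real N - 1) * (real N - 2) = 2 + real N * real N - real N * 3" by (simp add: algebra_simps)
    show "real N - 1 \<noteq> 0" "real N - 2 \<noteq> 0" "real N \<noteq> 0" "real N * real N - real N * 2 + 1 \<noteq> 0"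
     "1 + real N * real N - real N * 2 \<noteq> 0" "2 + real N * real N - real N * 3 \<noteq> 0"
     "1 + real N * real N \<noteq> real N * 2" "2 + real N * real N \<noteq> real N * 3"
      using n3 p e p2 e2 by linarith+
  qed
  let ?g = "\<lambda>T. (real N - 2) * real (card T) + wB u v T"
  have fg: "?f = (\<lambda>T. ?g T / (real N - 1)^2)" by (simp add: fun_eq_iff phi_def)
  have inner': "(\<Sum>y\<in>nbrs (if x \<in> S then ?K else ?M) N x. ?g (if x \<in> S then insert y S else S - {y}) - ?g S)
     = (\<Sum>y\<in>vset N. if (x \<notin> S \<longrightarrow> \<not> (x = u \<and> y = v) \<and> \<not> (x = v \<and> y = u))
          then ?g (if x \<in> S then insert y S else S - {y}) - ?g S else 0)" for x
    by (rule inner_red) (auto simp: adjM adjK)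
  have i1: "inverse (real N - 1) * (real N - 1) = 1" and i2: "inverse (real N - 2) * (real N - 2) = 1"
    using nz by auto
  have "(\<Sum>x\<in>vset N. (1 / real (card (nbrs (if x \<in> S then ?K else ?M) N x))) *
      (\<Sum>y\<in>nbrs (if x \<in> S then ?K else ?M) N x. ?g (if x \<in> S then insert y S else S - {y}) - ?g S)) = 0"
    unfolding inner' unfolding wB_def
    apply (cases "u \<in> S"; cases "v \<in> S")
    apply (simp_all add: split4b[OF u v uv, where S=S] card_b1[OF uv S u v] card_b2[OF uv S u v]
          card_nbrsM[OF u v uv] card_nbrsK card_insert_if card_rm notin_diff insert_absorb
          u v uv not_sym[OF uv] S finS N del: card_Diff_insert)
    apply (simp_all add: divide_inverse)
    subgoal by (((erule thin_rl)+, insert i1 i2, algebra) | simp add: algebra_simps)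
    subgoal by (((erule thin_rl)+, insert i1 i2, algebra) | simp add: algebra_simps)
    subgoal by (((erule thin_rl)+, insert i1 i2, algebra) | simp add: algebra_simps)
    subgoal by (((erule thin_rl)+, insert i1 i2, algebra) | simp add: algebra_simps)
    done
  then show ?thesis unfolding fg by (rule harm_from[OF one])
qed


theorem mainTheorem2:
  fixes N u v :: nat and S :: "nat set"
  assumes "N \<ge> 3"
    and "u \<in> vset N" and "v \<in> vset N" and "u \<noteq> v"
    and "S \<subseteq> vset N"
  defines "a \<equiv> card (S - {u, v})" and "b \<equiv> card (S \<inter> {u, v})"
  shows "fixation_prob_is (complete_minus_edge u v) complete_graph N S
           (((real a + real b) * (real N - 2) + real b * (real b - 1) / 2) / (real N - 1)^2)
       \<and> fixation_prob_is complete_graph (complete_minus_edge u v) N S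
           (((real a + real b) * (real N - 2) + real b * (3 - real b) / 2) / (real N - 1)^2)"
proof -
  note N = assms(1) and u = assms(2) and v = assms(3) and uv = assms(4) and S = assms(5)
  have finS: "finite S" by (rule finite_subset[OF S finite_vset])
  have cS: "card S = b + a" unfolding a_def b_def by (rule card_Int_Diff[OF finS])
  have bI: "real b = (if u \<in> S then 1 else 0) + (if v \<in> S then 1 else 0)"
    unfolding b_def using uv by (cases "u \<in> S"; cases "v \<in> S") (auto simp: Int_insert_right)
  have N0: "N > 0" using N by simp
  have deg: "nbrs (complete_minus_edge u v) N x \<noteq> {} \<and> nbrs complete_graph N x \<noteq> {}"
    if "x \<in> vset N" for x
  proof -
    have "real (card (nbrs (complete_minus_edge u v) N x)) > 0" "real (card (nbrs complete_graph N x)) > 0"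
      using card_nbrsM[OF u v uv that] card_nbrsK[OF that] N by auto
    then show ?thesis by auto
  qed
  have deg': "nbrs complete_graph N x \<noteq> {} \<and> nbrs (complete_minus_edge u v) N x \<noteq> {}"
    if "x \<in> vset N" for x using deg[OF that] by blast
  have e1: "((real a + real b) * (real N - 2) + real b * (real b - 1) / 2) / (real N - 1)^2 = phi (wA u v) N S"
    unfolding phi_def wA_def cS using bI by (cases "u \<in> S"; cases "v \<in> S") (auto simp: algebra_simps)
  have e2: "((real a + real b) * (real N - 2) + real b * (3 - real b) / 2) / (real N - 1)^2 = phi (wB u v) N S"
    unfolding phi_def wB_def cS using bI by (cases "u \<in> S"; cases "v \<in> S") (auto simp: algebra_simps)
  have wA0: "wA u v {} = 0" and wB0: "wB u v {} = 0" by (auto simp: wA_def wB_def)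
  have wA1: "wA u v (vset N) = 1" and wB1: "wB u v (vset N) = 1" using u v by (auto simp: wA_def wB_def)
  have F1: "fixation_prob_is (complete_minus_edge u v) complete_graph N S (phi (wA u v) N S)"
  proof (rule generic_fix[OF S N0 deg])
    show "\<And>S. S \<subseteq> vset N \<Longrightarrow> sexp (complete_minus_edge u v) complete_graph N (phi (wA u v) N) S = phi (wA u v) N S"
      by (rule harm1[OF N u v uv])
    show "\<And>S. S \<subseteq> vset N \<Longrightarrow> 0 \<le> phi (wA u v) N S \<and> phi (wA u v) N S \<le> 1"
      using phi_bounds[OF N u v] by blast
    show "phi (wA u v) N {} = 0" by (simp add: phi_def wA0)
    show "phi (wA u v) N (vset N) = 1" by (rule phi_full[where w="wA u v", OF N u v wA1])
    show "cst N > 0" by (rule cst_pos[OF N])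
    show "\<And>S. S \<subseteq> vset N \<Longrightarrow> S \<noteq> {} \<Longrightarrow> S \<noteq> vset N \<Longrightarrow>
      cst N \<le> sexp (complete_minus_edge u v) complete_graph N (\<lambda>T. (phi (wA u v) N T - phi (wA u v) N S)^2) S"
      by (rule var1[OF N u v uv])
  qed
  have F2: "fixation_prob_is complete_graph (complete_minus_edge u v) N S (phi (wB u v) N S)"
  proof (rule generic_fix[OF S N0 deg'])
    show "\<And>S. S \<subseteq> vset N \<Longrightarrow> sexp complete_graph (complete_minus_edge u v) N (phi (wB u v) N) S = phi (wB u v) N S"
      by (rule harm2[OF N u v uv])
    show "\<And>S. S \<subseteq> vset N \<Longrightarrow> 0 \<le> phi (wB u v) N S \<and> phi (wB u v) N S \<le> 1"
      using phi_bounds[OF N u v] by blast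
    show "phi (wB u v) N {} = 0" by (simp add: phi_def wB0)
    show "phi (wB u v) N (vset N) = 1" by (rule phi_full[where w="wB u v", OF N u v wB1])
    show "cst N > 0" by (rule cst_pos[OF N])
    show "\<And>S. S \<subseteq> vset N \<Longrightarrow> S \<noteq> {} \<Longrightarrow> S \<noteq> vset N \<Longrightarrow>
      cst N \<le> sexp complete_graph (complete_minus_edge u v) N (\<lambda>T. (phi (wB u v) N T - phi (wB u v) N S)^2) S"
      by (rule var2[OF N u v uv])
  qed
  show ?thesis unfolding e1 e2 using F1 F2 by blast
qed


end
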